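(* Let $\{\mathcal F_{N,\varepsilon}\}$ be nested and scale-invariant families of probability distributions and let $\eta$ be a denoiser family obeying the scaling relation. Then for every $\varepsilon$, $$\delta_{SE}(\varepsilon\mid\eta)=M(\varepsilon\mid\eta).$$
   Context: A denoiser family is a collection of maps $\eta(\cdot;\tau,\sigma):\mathbb R^N\to\mathbb R^N$ ($N\ge1$, $\tau\in\Theta$, $\sigma>0$) with $\eta(y;\tau,\sigma)=\sigma\,\eta(y/\sigma;\tau)$, where $\eta(\cdot;\tau)=\eta(\cdot;\tau,1)$. Families $\mathcal F_{N,\varepsilon}\subseteq\mathcal P(\mathbb R^N)$, $\varepsilon\in[0,1]$, are nested if $\varepsilon_1\le\varepsilon_2\Rightarrow\mathcal F_{N,\varepsilon_1}\subseteq\mathcal F_{N,\varepsilon_2}$, and scale-invariant if $\nu_N\in\mathcal F_{N,\varepsilon}$ implies that the law of $a\mathbf X$ ($\mathbf X\sim\nu_N$) lies in $\mathcal F_{N,\varepsilon}$ for every $a>0$. Write $\nu\in\mathcal F_\varepsilon$ for sequences $\nu=\{\nu_N\}$ with $\nu_N\in\mathcal F_{N,\varepsilon}$ for all $N$ such that, for every $\tau\in\Theta$ and $\sigma>0$, the limit $\lim_{N\to\infty}\frac1N\mathbb E_{\nu_N}\|\mathbf X-\eta(\mathbf X+\sigma\mathbf Z;\tau,\sigma)\|_2^2$ exists ($\mathbf X\sim\nu_N$, $\mathbf Z\sim\mathsf N(0,I_{N\times N})$ independent). State evolution map: $\Psi(m;\delta,\tau,\nu)=\lim_{N\to\infty}\frac1N\mathbb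 E_{\nu_N}\|\mathbf X-\eta(\mathbf X+\sqrt{m/\delta}\,\mathbf Z;\tau,\sqrt{m/\delta})\|_2^2$ for $m,\delta>0$; $\mathrm{HFP}(\delta,\tau,\nu)=\sup(\{0\}\cup\{m>0:\Psi(m;\delta,\tau,\nu)\ge m\})$; $\mathrm{HFP}^*(\varepsilon,\delta)=\inf_{\tau\in\Theta}\sup_{\nu\in\mathcal F_\varepsilon}\mathrm{HFP}(\delta,\tau,\nu)$; $\delta_{SE}(\varepsilon\mid\eta)=\inf\{\delta>0:\mathrm{HFP}^*(\varepsilon,\delta)=0\}$. The asymptotic minimax MSE is $M(\varepsilon\mid\eta)=\inf_{\tau\in\Theta}\sup_{\nu\in\mathcal F_\varepsilon}\lim_{N\to\infty}\frac1N\mathbb E_{\nu_N}\|\mathbf X-\eta(\mathbf X+\mathbf Z;\tau)\|_2^2$.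
   Formalization: Each coordinate of $\eta(\cdot;\tau,\sigma)$ is also Borel measurable for every $N\ge1$, $\tau\in\Theta$ and $\sigma>0$, and the limit whose existence defines $\nu\in\mathcal F_\varepsilon$ is required to be finite. Each condition added here is assumed in the paper as well or is needed for the statement above to hold. *)

theory Defs
  imports "HOL-Probability.Probability"
begin

text \<open>Euclidean space R^N is represented by extensional functions on the index set {..<N},
  with the product Borel sg-algebra.\<close>

definition RN :: "nat \<Rightarrow> (nat \<Rightarrow> real) measure" where
  "RN N = PiM {..<N} (\<lambda>_. borel)"

definition gaussN :: "nat \<Rightarrow> (nat \<Rightarrow> real) measure" where
  "gaussN N = PiM {..<N} (\<lambda>_. density lborel std_normal_density)"

definition vscale :: "nat \<Rightarrow> real \<Rightarrow> (nat \<Rightarrow> real) \<Rightarrow> (nat \<Rightarrow> real)" where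
  "vscale N a x = restrict (\<lambda>i. a * x i) {..<N}"

definition vadd :: "nat \<Rightarrow> (nat \<Rightarrow> real) \<Rightarrow> (nat \<Rightarrow> real) \<Rightarrow> (nat \<Rightarrow> real)" where
  "vadd N x y = restrict (\<lambda>i. x i + y i) {..<N}"

definition sqdist :: "nat \<Rightarrow> (nat \<Rightarrow> real) \<Rightarrow> (nat \<Rightarrow> real) \<Rightarrow> real" where
  "sqdist N x y = (\<Sum>i<N. (x i - y i)^2)"

text \<open>Denoiser family: eta N tau sg : R^N -> R^N is eta(.; tau, sg) in dimension N.\<close>
type_synonym 't denoiser = "nat \<Rightarrow> 't \<Rightarrow> real \<Rightarrow> (nat \<Rightarrow> real) \<Rightarrow> (nat \<Rightarrow> real)"

definition denoiser_scaling :: "'t set \<Rightarrow> 't denoiser \<Rightarrow> bool" where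
  "denoiser_scaling Theta eta \<longleftrightarrow>
     (\<forall>N\<ge>1. \<forall>tau\<in>Theta. \<forall>sg>0. \<forall>y\<in>space (RN N). \<forall>i<N.
        eta N tau sg y i = sg * eta N tau 1 (vscale N (1 / sg) y) i)"

definition risk :: "'t denoiser \<Rightarrow> nat \<Rightarrow> 't \<Rightarrow> real \<Rightarrow> (nat \<Rightarrow> real) measure \<Rightarrow> ennreal" where
  "risk eta N tau sg mu =
     ennreal (1 / real N) *
     (\<integral>\<^sup>+ p. ennreal (sqdist N (fst p) (eta N tau sg (vadd N (fst p) (vscale N sg (snd p)))))
        \<partial>(mu \<Otimes>\<^sub>M gaussN N))"

type_synonym family = "nat \<Rightarrow> real \<Rightarrow> (nat \<Rightarrow> real) measure set"

definition prob_families :: "family \<Rightarrow> bool" where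
  "prob_families F \<longleftrightarrow>
     (\<forall>N\<ge>1. \<forall>eps\<in>{0..1}. \<forall>mu\<in>F N eps. prob_space mu \<and> sets mu = sets (RN N))"

definition nested :: "family \<Rightarrow> bool" where
  "nested F \<longleftrightarrow> (\<forall>N\<ge>1. \<forall>e1\<in>{0..1}. \<forall>e2\<in>{0..1}. e1 \<le> e2 \<longrightarrow> F N e1 \<subseteq> F N e2)"

definition scale_invariant :: "family \<Rightarrow> bool" where
  "scale_invariant F \<longleftrightarrow>
     (\<forall>N\<ge>1. \<forall>eps\<in>{0..1}. \<forall>mu\<in>F N eps. \<forall>a>0. distr mu (RN N) (vscale N a) \<in> F N eps)"

definition inF :: "family \<Rightarrow> 't set \<Rightarrow> 't denoiser \<Rightarrow> real \<Rightarrow> (nat \<Rightarrow> (nat \<Rightarrow> real) measure) set" where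
  "inF F Theta eta eps =
     {nu. (\<forall>N\<ge>1. nu N \<in> F N eps) \<and>
          (\<forall>tau\<in>Theta. \<forall>sg>0. \<exists>L. L \<noteq> \<infinity> \<and> (\<lambda>N. risk eta N tau sg (nu N)) \<longlonglongrightarrow> L)}"

definition Psi :: "'t denoiser \<Rightarrow> real \<Rightarrow> real \<Rightarrow> 't \<Rightarrow> (nat \<Rightarrow> (nat \<Rightarrow> real) measure) \<Rightarrow> ennreal" where
  "Psi eta m delta tau nu = lim (\<lambda>N. risk eta N tau (sqrt (m / delta)) (nu N))"

definition HFP :: "'t denoiser \<Rightarrow> real \<Rightarrow> 't \<Rightarrow> (nat \<Rightarrow> (nat \<Rightarrow> real) measure) \<Rightarrow> ennreal" where
  "HFP eta delta tau nu =
     Sup ({0} \<union> {ennreal m | m. m > 0 \<and> Psi eta m delta tau nu \<ge> ennreal m})"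

definition HFPstar :: "family \<Rightarrow> 't set \<Rightarrow> 't denoiser \<Rightarrow> real \<Rightarrow> real \<Rightarrow> ennreal" where
  "HFPstar F Theta eta eps delta =
     (INF tau\<in>Theta. SUP nu\<in>inF F Theta eta eps. HFP eta delta tau nu)"

definition delta_SE :: "family \<Rightarrow> 't set \<Rightarrow> 't denoiser \<Rightarrow> real \<Rightarrow> ennreal" where
  "delta_SE F Theta eta eps = Inf {ennreal delta | delta. delta > 0 \<and> HFPstar F Theta eta eps delta = 0}"

definition minimax_MSE :: "family \<Rightarrow> 't set \<Rightarrow> 't denoiser \<Rightarrow> real \<Rightarrow> ennreal" where
  "minimax_MSE F Theta eta eps =
     (INF tau\<in>Theta. SUP nu\<in>inF F Theta eta eps. lim (\<lambda>N. risk eta N tau 1 (nu N)))"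

end

theory Submission
  imports Defs
begin


lemma vadd_vscale: "vadd N x (vscale N s z) = restrict (\<lambda>i. x i + s * z i) {..<N}"
  by (auto simp: vadd_def vscale_def)

lemma vadd_meas:
  shows "(\<lambda>p. vadd N (fst p) (vscale N s (snd p))) \<in> measurable (RN N \<Otimes>\<^sub>M gaussN N) (RN N)"
  unfolding vadd_vscale RN_def gaussN_def
  by measurable

lemma f_meas:
  assumes meas: "\<forall>tau\<in>Theta. \<forall>sg>0. \<forall>i<N. (\<lambda>y. eta N tau sg y i) \<in> borel_measurable (RN N)"
    and "tau \<in> Theta" "s > 0" "sets M = sets (RN N)"
  shows "(\<lambda>p. ennreal (sqdist N (fst p) (eta N tau s (vadd N (fst p) (vscale N s (snd p)))))) \<in> borel_measurable (M \<Otimes>\<^sub>M gaussN N)"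
proof -
  have s: "sets (M \<Otimes>\<^sub>M gaussN N) = sets (RN N \<Otimes>\<^sub>M gaussN N)"
    by (rule sets_pair_measure_cong) (use assms in auto)
  have v: "(\<lambda>p. vadd N (fst p) (vscale N s (snd p))) \<in> measurable (RN N \<Otimes>\<^sub>M gaussN N) (RN N)"
    using vadd_meas assms by blast
  have c: "\<And>i. i < N \<Longrightarrow> (\<lambda>p. eta N tau s (vadd N (fst p) (vscale N s (snd p))) i) \<in> borel_measurable (RN N \<Otimes>\<^sub>M gaussN N)"
    by (rule measurable_compose[OF v]) (use meas assms in auto)
  have x: "\<And>i. i < N \<Longrightarrow> (\<lambda>p. fst p i) \<in> borel_measurable (RN N \<Otimes>\<^sub>M gaussN N)"
    unfolding RN_def by measurable
  have "(\<lambda>p. ennreal (sqdist N (fst p) (eta N tau s (vadd N (fst p) (vscale N s (snd p)))))) \<in> borel_measurable (RN N \<Otimes>\<^sub>M gaussN N)"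
    unfolding sqdist_def using c x by measurable
  then show ?thesis using measurable_cong_sets[OF s refl] by blast
qed

lemma space_RN: "space (RN N) = PiE {..<N} (\<lambda>_. UNIV)"
  by (simp add: RN_def space_PiM)

lemma prob_gaussN: "prob_space (gaussN N)"
  unfolding gaussN_def by (rule prob_space_PiM) (simp add: prob_space_normal_density)

lemma pointwise:
  assumes sc: "denoiser_scaling Theta eta" and N: "N \<ge> 1" and tau: "tau \<in> Theta"
    and sg: "sg > 0" and a: "a > 0"
  shows "sqdist N (vscale N a x) (eta N tau sg (vadd N (vscale N a x) (vscale N sg z)))
     = a^2 * sqdist N x (eta N tau (sg/a) (vadd N x (vscale N (sg/a) z)))"
proof -
  define y where "y = vadd N (vscale N a x) (vscale N sg z)"
  define y' where "y' = vadd N x (vscale N (sg/a) z)"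
  have ys: "y \<in> space (RN N)" "y' \<in> space (RN N)"
    unfolding y_def y'_def space_RN vadd_def by auto
  have eq: "vscale N (1/sg) y = vscale N (1 / (sg/a)) y'"
    unfolding y_def y'_def vadd_def vscale_def using sg a
    by (auto simp: fun_eq_iff field_simps)
  have e: "eta N tau sg y i = a * eta N tau (sg/a) y' i" if "i < N" for i
  proof -
    have "eta N tau sg y i = sg * eta N tau 1 (vscale N (1/sg) y) i"
      using sc N tau sg ys that unfolding denoiser_scaling_def by blast
    moreover have "eta N tau (sg/a) y' i = (sg/a) * eta N tau 1 (vscale N (1/(sg/a)) y') i"
      using sc N tau sg a ys that unfolding denoiser_scaling_def by auto
    ultimately show ?thesis using eq a by simp
  qed
  have "sqdist N (vscale N a x) (eta N tau sg y) = (\<Sum>i<N. (a * x i - a * eta N tau (sg/a) y' i)^2)"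
    unfolding sqdist_def vscale_def using e by (intro sum.cong) auto
  also have "\<dots> = a^2 * sqdist N x (eta N tau (sg/a) y')"
    unfolding sqdist_def sum_distrib_left
    by (intro sum.cong) (auto simp: power2_eq_square algebra_simps)
  finally show ?thesis unfolding y_def y'_def .
qed

lemma risk_scale:
  assumes sc: "denoiser_scaling Theta eta"
    and meas: "\<forall>N\<ge>1. \<forall>tau\<in>Theta. \<forall>sg>0. \<forall>i<N. (\<lambda>y. eta N tau sg y i) \<in> borel_measurable (RN N)"
    and tau: "tau \<in> Theta" and sg: "sg > 0" and a: "a > 0"
    and mu: "N \<ge> 1 \<Longrightarrow> sets mu = sets (RN N)"
  shows "risk eta N tau sg (distr mu (RN N) (vscale N a)) = ennreal (a^2) * risk eta N tau (sg/a) mu"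
proof (cases "N = 0")
  case True then show ?thesis by (simp add: risk_def)
next
  case False
  then have N: "N \<ge> 1" by simp
  have ms: "sets mu = sets (RN N)" using mu N by simp
  have m1: "\<forall>tau\<in>Theta. \<forall>sg>0. \<forall>i<N. (\<lambda>y. eta N tau sg y i) \<in> borel_measurable (RN N)"
    using meas N by blast
  have vs: "vscale N a \<in> measurable mu (RN N)"
    unfolding measurable_cong_sets[OF ms refl] unfolding vscale_def RN_def by measurable
  interpret G: prob_space "gaussN N" by (rule prob_gaussN)
  have pd: "distr mu (RN N) (vscale N a) \<Otimes>\<^sub>M gaussN N
      = distr (mu \<Otimes>\<^sub>M gaussN N) (RN N \<Otimes>\<^sub>M gaussN N) (\<lambda>(x, y). (vscale N a x, y))"
    using pair_measure_distr[OF vs measurable_id[of "gaussN N"]] G.sigma_finite_measure_axioms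
    by (simp add: id_def)
  have fm: "(\<lambda>p. ennreal (sqdist N (fst p) (eta N tau sg (vadd N (fst p) (vscale N sg (snd p)))))) \<in> borel_measurable (RN N \<Otimes>\<^sub>M gaussN N)"
    using f_meas[of Theta N eta tau sg "RN N"] m1 tau sg by simp
  have fm2: "(\<lambda>p. ennreal (sqdist N (fst p) (eta N tau (sg/a) (vadd N (fst p) (vscale N (sg/a) (snd p)))))) \<in> borel_measurable (mu \<Otimes>\<^sub>M gaussN N)"
    using f_meas[of Theta N eta tau "sg/a" mu] m1 tau sg a ms by simp
  have T: "(\<lambda>(x, y). (vscale N a x, y)) \<in> measurable (mu \<Otimes>\<^sub>M gaussN N) (RN N \<Otimes>\<^sub>M gaussN N)"
    using vs by measurable
  have "(\<integral>\<^sup>+ p. ennreal (sqdist N (fst p) (eta N tau sg (vadd N (fst p) (vscale N sg (snd p))))) \<partial>(distr mu (RN N) (vscale N a) \<Otimes>\<^sub>M gaussN N))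
     = (\<integral>\<^sup>+ p. ennreal (sqdist N (vscale N a (fst p)) (eta N tau sg (vadd N (vscale N a (fst p)) (vscale N sg (snd p))))) \<partial>(mu \<Otimes>\<^sub>M gaussN N))"
    unfolding pd by (subst nn_integral_distr[OF T]) (use fm in \<open>auto simp: case_prod_beta\<close>)
  also have "\<dots> = (\<integral>\<^sup>+ p. ennreal (a^2) * ennreal (sqdist N (fst p) (eta N tau (sg/a) (vadd N (fst p) (vscale N (sg/a) (snd p))))) \<partial>(mu \<Otimes>\<^sub>M gaussN N))"
  proof (intro nn_integral_cong)
    fix p :: "(nat \<Rightarrow> real) \<times> (nat \<Rightarrow> real)"
    have "0 \<le> sqdist N (fst p) (eta N tau (sg/a) (vadd N (fst p) (vscale N (sg/a) (snd p))))"
      unfolding sqdist_def by (simp add: sum_nonneg)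
    then show "ennreal (sqdist N (vscale N a (fst p)) (eta N tau sg (vadd N (vscale N a (fst p)) (vscale N sg (snd p))))) =
      ennreal (a^2) * ennreal (sqdist N (fst p) (eta N tau (sg/a) (vadd N (fst p) (vscale N (sg/a) (snd p)))))"
      by (simp add: pointwise[OF sc N tau sg a] ennreal_mult)
  qed
  also have "\<dots> = ennreal (a^2) * (\<integral>\<^sup>+ p. ennreal (sqdist N (fst p) (eta N tau (sg/a) (vadd N (fst p) (vscale N (sg/a) (snd p))))) \<partial>(mu \<Otimes>\<^sub>M gaussN N))"
    by (rule nn_integral_cmult[OF fm2])
  finally show ?thesis unfolding risk_def by (simp add: ac_simps)
qed

lemma inF_scale:
  assumes pf: "prob_families F" and si: "scale_invariant F"
    and sc: "denoiser_scaling Theta eta"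
    and meas: "\<forall>N\<ge>1. \<forall>tau\<in>Theta. \<forall>sg>0. \<forall>i<N. (\<lambda>y. eta N tau sg y i) \<in> borel_measurable (RN N)"
    and eps: "eps \<in> {0..1}" and nu: "nu \<in> inF F Theta eta eps" and a: "a > 0"
  shows "(\<lambda>N. distr (nu N) (RN N) (vscale N a)) \<in> inF F Theta eta eps"
proof -
  have F: "\<forall>N\<ge>1. nu N \<in> F N eps" using nu unfolding inF_def by blast
  have sets: "N \<ge> 1 \<Longrightarrow> sets (nu N) = sets (RN N)" for N
    using pf F eps unfolding prob_families_def by blast
  have "\<forall>N\<ge>1. distr (nu N) (RN N) (vscale N a) \<in> F N eps"
    using si F eps a unfolding scale_invariant_def by blast
  moreover have "\<exists>L. L \<noteq> \<infinity> \<and> (\<lambda>N. risk eta N tau sg (distr (nu N) (RN N) (vscale N a))) \<longlonglongrightarrow> L"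
    if tau: "tau \<in> Theta" and sg: "sg > 0" for tau sg
  proof -
    obtain L where L: "L \<noteq> \<infinity>" "(\<lambda>N. risk eta N tau (sg/a) (nu N)) \<longlonglongrightarrow> L"
    proof -
      have "sg / a > 0" using sg a by simp
      then show ?thesis using nu tau that unfolding inF_def by blast
    qed
    have eq: "risk eta N tau sg (distr (nu N) (RN N) (vscale N a)) = ennreal (a^2) * risk eta N tau (sg/a) (nu N)" for N
      by (rule risk_scale[OF sc meas tau sg a sets])
    have "(\<lambda>N. ennreal (a^2) * risk eta N tau (sg/a) (nu N)) \<longlonglongrightarrow> ennreal (a^2) * L"
      by (rule ennreal_tendsto_cmult[OF _ L(2)]) simp
    moreover have "ennreal (a^2) * L \<noteq> \<infinity>" using L(1) by (simp add: ennreal_mult_eq_top_iff)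
    ultimately show ?thesis unfolding eq by blast
  qed
  ultimately show ?thesis unfolding inF_def by blast
qed

lemma part2:
  assumes pf: "prob_families F" and si: "scale_invariant F"
    and sc: "denoiser_scaling Theta eta"
    and meas: "\<forall>N\<ge>1. \<forall>tau\<in>Theta. \<forall>sg>0. \<forall>i<N. (\<lambda>y. eta N tau sg y i) \<in> borel_measurable (RN N)"
    and eps: "eps \<in> {0..1}" and nu: "nu \<in> inF F Theta eta eps" and d: "delta > 0"
    and tau: "tau \<in> Theta"
    and all: "\<forall>nu\<in>inF F Theta eta eps. lim (\<lambda>N. risk eta N tau 1 (nu N)) < ennreal delta"
  shows "HFP eta delta tau nu = 0"
proof -
  have E: "{ennreal m | m. m > 0 \<and> Psi eta m delta tau nu \<ge> ennreal m} = {}"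
  proof (rule ccontr)
    assume "\<not> ?thesis"
    then obtain m where m: "m > 0" "Psi eta m delta tau nu \<ge> ennreal m" by blast
    define s where "s = sqrt (m / delta)"
    have s: "s > 0" using m d by (simp add: s_def)
    have s2: "s^2 = m / delta" using m d by (simp add: s_def)
    define nu' where "nu' = (\<lambda>N. distr (nu N) (RN N) (vscale N (1/s)))"
    have nu': "nu' \<in> inF F Theta eta eps"
      unfolding nu'_def by (rule inF_scale[OF pf si sc meas eps nu]) (use s in simp)
    have sets: "N \<ge> 1 \<Longrightarrow> sets (nu N) = sets (RN N)" for N
      using pf nu eps unfolding prob_families_def inF_def by blast
    have eq: "risk eta N tau s (nu N) = ennreal (s^2) * risk eta N tau 1 (nu' N)" for N
    proof -
      have "risk eta N tau 1 (nu' N) = ennreal ((1/s)^2) * risk eta N tau (1/(1/s)) (nu N)"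
        unfolding nu'_def by (rule risk_scale[OF sc meas tau _ _ sets]) (use s in auto)
      then have "ennreal (s^2) * risk eta N tau 1 (nu' N) = ennreal (s^2) * ennreal ((1/s)^2) * risk eta N tau s (nu N)"
        by (simp add: mult.assoc)
      also have "ennreal (s^2) * ennreal ((1/s)^2) = 1"
        using s by (simp add: ennreal_mult[symmetric] power_one_over field_simps)
      finally show ?thesis by simp
    qed
    have "\<forall>tau\<in>Theta. \<forall>sg>0. \<exists>L. L \<noteq> \<infinity> \<and> (\<lambda>N. risk eta N tau sg (nu' N)) \<longlonglongrightarrow> L"
      using nu' unfolding inF_def by blast
    then obtain L where L: "L \<noteq> \<infinity>" "(\<lambda>N. risk eta N tau 1 (nu' N)) \<longlonglongrightarrow> L"
      using tau by (meson zero_less_one)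
    have "L < ennreal delta" using bspec[OF all nu'] limI[OF L(2)] by simp
    have lim: "(\<lambda>N. risk eta N tau s (nu N)) \<longlonglongrightarrow> ennreal (s^2) * L"
      unfolding eq by (rule ennreal_tendsto_cmult[OF _ L(2)]) simp
    have "Psi eta m delta tau nu = ennreal (s^2) * L"
      unfolding Psi_def s_def[symmetric] using limI[OF lim] .
    also have "\<dots> < ennreal (s^2) * ennreal delta"
      by (rule ennreal_mult_strict_left_mono[OF \<open>L < ennreal delta\<close>]) (use s in auto)
    also have "\<dots> = ennreal m" using s2 d m(1) by (simp add: ennreal_mult[symmetric])
    finally show False using m(2) by simp
  qed
  show ?thesis unfolding HFP_def E by simp
qed

lemma part1:
  assumes d: "delta > 0"
    and R: "lim (\<lambda>N. risk eta N tau 1 (nu N)) \<ge> ennreal delta"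
  shows "HFP eta delta tau nu \<ge> ennreal delta"
proof -
  have "Psi eta delta delta tau nu = lim (\<lambda>N. risk eta N tau 1 (nu N))"
    unfolding Psi_def using d by simp
  then have "ennreal delta \<in> {ennreal m | m. m > 0 \<and> Psi eta m delta tau nu \<ge> ennreal m}"
    using d R by auto
  then show ?thesis unfolding HFP_def by (intro Sup_upper) auto
qed


theorem mainTheorem16:
  fixes F :: family and Theta :: "'t set" and eta :: "'t denoiser" and eps :: real
  assumes "prob_families F" and "nested F" and "scale_invariant F"
    and "denoiser_scaling Theta eta"
    and "\<forall>N\<ge>1. \<forall>tau\<in>Theta. \<forall>sg>0. \<forall>i<N. (\<lambda>y. eta N tau sg y i) \<in> borel_measurable (RN N)"
    and "eps \<in> {0..1}"
  shows "delta_SE F Theta eta eps = minimax_MSE F Theta eta eps"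
proof -
  note pf = assms(1) and si = assms(3) and sc = assms(4) and meas = assms(5) and eps = assms(6)
  define I where "I = inF F Theta eta eps"
  define R where "R = (\<lambda>tau nu. lim (\<lambda>N. risk eta N tau 1 (nu N)))"
  define S where "S = (\<lambda>tau. SUP nu\<in>I. R tau nu)"
  have key: "HFPstar F Theta eta eps delta = 0 \<longleftrightarrow> (\<exists>tau\<in>Theta. \<forall>nu\<in>I. R tau nu < ennreal delta)"
    if d: "delta > 0" for delta
  proof
    assume "\<exists>tau\<in>Theta. \<forall>nu\<in>I. R tau nu < ennreal delta"
    then obtain tau where tau: "tau \<in> Theta" and all: "\<forall>nu\<in>I. R tau nu < ennreal delta" by blast
    have "(SUP nu\<in>I. HFP eta delta tau nu) = 0"
    proof -
      have "\<And>nu. nu \<in> I \<Longrightarrow> HFP eta delta tau nu = 0"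
        using part2[OF pf si sc meas eps _ d tau] all unfolding I_def R_def by blast
      then show ?thesis by (intro antisym SUP_least) auto
    qed
    then have "HFPstar F Theta eta eps delta \<le> 0"
      unfolding HFPstar_def I_def[symmetric] using tau by (metis INF_lower)
    then show "HFPstar F Theta eta eps delta = 0" by simp
  next
    assume h: "HFPstar F Theta eta eps delta = 0"
    show "\<exists>tau\<in>Theta. \<forall>nu\<in>I. R tau nu < ennreal delta"
    proof (rule ccontr)
      assume "\<not> ?thesis"
      then have "\<forall>tau\<in>Theta. \<exists>nu\<in>I. R tau nu \<ge> ennreal delta" by (auto simp: not_less)
      have "\<forall>tau\<in>Theta. ennreal delta \<le> (SUP nu\<in>I. HFP eta delta tau nu)"
      proof
        fix tau assume "tau \<in> Theta"
        then obtain nu where nu: "nu \<in> I" "R tau nu \<ge> ennreal delta" using \<open>\<forall>tau\<in>Theta. \<exists>nu\<in>I. R tau nu \<ge> ennreal delta\<close> by blast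
        have "ennreal delta \<le> HFP eta delta tau nu" using nu(2) unfolding R_def by (rule part1[OF d])
        then show "ennreal delta \<le> (SUP nu\<in>I. HFP eta delta tau nu)" using nu(1) by (meson SUP_upper order_trans)
      qed
      then have "ennreal delta \<le> HFPstar F Theta eta eps delta"
        unfolding HFPstar_def I_def[symmetric] by (simp add: le_INF_iff)
      then show False using h d by simp
    qed
  qed
  have D: "{ennreal delta | delta. delta > 0 \<and> HFPstar F Theta eta eps delta = 0}
     = {ennreal delta | delta. delta > 0 \<and> (\<exists>tau\<in>Theta. \<forall>nu\<in>I. R tau nu < ennreal delta)}"
    using key by blast
  have M: "minimax_MSE F Theta eta eps = (INF tau\<in>Theta. S tau)"
    unfolding minimax_MSE_def S_def R_def I_def ..
  show ?thesis
    unfolding delta_SE_def D M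
  proof (rule antisym)
    show "Inf {ennreal delta | delta. delta > 0 \<and> (\<exists>tau\<in>Theta. \<forall>nu\<in>I. R tau nu < ennreal delta)} \<le> (INF tau\<in>Theta. S tau)"
    proof (rule INF_greatest)
      fix tau assume tau: "tau \<in> Theta"
      show "Inf {ennreal delta | delta. delta > 0 \<and> (\<exists>tau\<in>Theta. \<forall>nu\<in>I. R tau nu < ennreal delta)} \<le> S tau"
      proof (rule ennreal_le_epsilon)
        fix e :: real assume fin: "S tau < top" and e: "0 < e"
        define d where "d = enn2real (S tau) + e"
        have d0: "d > 0" unfolding d_def using e enn2real_nonneg[of "S tau"] by linarith
        have Sd: "S tau = ennreal (enn2real (S tau))" using fin by simp
        have "\<forall>nu\<in>I. R tau nu < ennreal d"
        proof
          fix nu assume "nu \<in> I"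
          then have "R tau nu \<le> S tau" unfolding S_def by (rule SUP_upper)
          also have "\<dots> < ennreal d" using e fin
            by (subst Sd) (simp add: d_def ennreal_lessI)
          finally show "R tau nu < ennreal d" .
        qed
        then have "ennreal d \<in> {ennreal delta | delta. delta > 0 \<and> (\<exists>tau\<in>Theta. \<forall>nu\<in>I. R tau nu < ennreal delta)}"
          using d0 tau by blast
        then have "Inf {ennreal delta | delta. delta > 0 \<and> (\<exists>tau\<in>Theta. \<forall>nu\<in>I. R tau nu < ennreal delta)} \<le> ennreal d"
          by (rule Inf_lower)
        also have "ennreal d = S tau + ennreal e"
          using e by (subst Sd) (simp add: d_def ennreal_plus)
        finally show "Inf {ennreal delta | delta. delta > 0 \<and> (\<exists>tau\<in>Theta. \<forall>nu\<in>I. R tau nu < ennreal delta)} \<le> S tau + ennreal e" .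
      qed
    qed
  next
    show "(INF tau\<in>Theta. S tau) \<le> Inf {ennreal delta | delta. delta > 0 \<and> (\<exists>tau\<in>Theta. \<forall>nu\<in>I. R tau nu < ennreal delta)}"
    proof (rule Inf_greatest)
      fix x assume "x \<in> {ennreal delta | delta. delta > 0 \<and> (\<exists>tau\<in>Theta. \<forall>nu\<in>I. R tau nu < ennreal delta)}"
      then obtain delta tau where x: "x = ennreal delta" and tau: "tau \<in> Theta"
        and all: "\<forall>nu\<in>I. R tau nu < ennreal delta" by blast
      have "(INF tau\<in>Theta. S tau) \<le> S tau" using tau by (rule INF_lower)
      also have "S tau \<le> x" unfolding S_def x using all by (intro SUP_least) (simp add: less_imp_le)
      finally show "(INF tau\<in>Theta. S tau) \<le> x" .
    qed
  qed
qed
end
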